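(* Let $A=(a_{ij})\in M(m,\mathbb{C})$ be invertible and let $X_A$ be a complex algebra spanned by elements $\{x_{ij}:i,j=1,\ldots,m\}$ (not assumed linearly independent) satisfying $x_{ij}x_{kl}=a_{jk}x_{il}$. Then either $X_A=\{0\}$, or $X_A\neq\{0\}$, in which case $X_A$ is isomorphic to the matrix algebra $M(m,\mathbb{C})$, the elements $x_{ij}$ are linearly independent (in particular all nonzero) and form a basis of $X_A$, and the unit of $X_A$ is $\mathbb{1}=\sum_{i,j=1}^m (A^{-1})_{ij}\,x_{ij}$. *)

theory Defs
  imports "HOL-Analysis.Analysis"
begin

definition mat_cscale :: "complex \<Rightarrow> complex^'n^'n \<Rightarrow> complex^'n^'n" where
  "mat_cscale c M = (\<chi> i j. c * M $ i $ j)"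

text \<open>A (possibly non-unital) associative complex algebra structure on a type 'a with ring
  operations, given by a complex scalar multiplication s: 'a is a complex vector space and
  multiplication is bilinear over the complex numbers.\<close>
definition complex_algebra :: "(complex \<Rightarrow> 'a::ring \<Rightarrow> 'a) \<Rightarrow> bool" where
  "complex_algebra s \<longleftrightarrow> vector_space s \<and>
     (\<forall>c x y. s c (x * y) = s c x * y \<and> s c (x * y) = x * s c y)"

definition matrix_algebra_iso ::
  "(complex \<Rightarrow> 'a::ring \<Rightarrow> 'a) \<Rightarrow> (complex^'n^'n \<Rightarrow> 'a) \<Rightarrow> bool" where
  "matrix_algebra_iso s f \<longleftrightarrow> bij f \<and>
     (\<forall>M N. f (M + N) = f M + f N) \<and>
     (\<forall>c M. f (mat_cscale c M) = s c (f M)) \<and>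
     (\<forall>M N. f (M ** N) = f M * f N)"

end

theory Submission
  imports Defs
begin

locale XA = vector_space s for s :: "complex \<Rightarrow> 'a::ring \<Rightarrow> 'a" +
  fixes A :: "complex^'n^'n" and x :: "'n \<Rightarrow> 'n \<Rightarrow> 'a"
  assumes ml: "\<And>c y z. s c (y * z) = s c y * z"
    and mr: "\<And>c y z. s c (y * z) = y * s c z"
    and inv: "invertible A"
    and rel: "\<And>i j k l. x i j * x k l = s (A $ j $ k) (x i l)"
begin

definition "B = matrix_inv A"

lemma AB: "A ** B = mat 1" and BA: "B ** A = mat 1"
proof -
  have "A ** matrix_inv A = mat 1 \<and> matrix_inv A ** A = mat 1"
    unfolding matrix_inv_def using inv unfolding invertible_def by (rule someI_ex)
  then show "A ** B = mat 1" "B ** A = mat 1" by (auto simp: B_def)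
qed

lemma smult: "s a y * s b z = s (a * b) (y * z)"
  by (metis ml mr scale_scale)

lemma sum_mult_sum: "(\<Sum>p\<in>P. f p) * (\<Sum>q\<in>Q. g q :: 'a) = (\<Sum>p\<in>P. \<Sum>q\<in>Q. f p * g q)"
  unfolding sum_distrib_right by (simp add: sum_distrib_left)

lemma sif: "s (if P then 1 else 0) y = (if P then y else 0)"
  by simp

lemma delta2: "(\<Sum>j\<in>(UNIV::'n set). \<Sum>l\<in>L. s (c j l) (if j = k then e l else 0)) = (\<Sum>l\<in>L. s (c k l) (e l))"
proof -
  have "(\<Sum>j\<in>(UNIV::'n set). \<Sum>l\<in>L. s (c j l) (if j = k then e l else 0))
     = (\<Sum>j\<in>(UNIV::'n set). if j = k then (\<Sum>l\<in>L. s (c j l) (e l)) else 0)"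
    by (rule sum.cong) auto
  also have "\<dots> = (\<Sum>l\<in>L. s (c k l) (e l))" by (simp add: sum.delta')
  finally show ?thesis .
qed

lemma mult_sum: "(y::'a) * (\<Sum>q\<in>Q. g q) = (\<Sum>q\<in>Q. y * g q)"
  by (simp add: sum_distrib_left)
lemma sum_mult: "(\<Sum>q\<in>Q. g q) * (y::'a) = (\<Sum>q\<in>Q. g q * y)"
  by (simp add: sum_distrib_right)

definition E :: "'n \<Rightarrow> 'n \<Rightarrow> 'a" where
  "E i l = (\<Sum>k\<in>UNIV. s (B$l$k) (x i k))"

lemma EE: "E i j * E k l = (if j = k then E i l else 0)"
proof -
  have "E i j * E k l = (\<Sum>p\<in>UNIV. \<Sum>q\<in>UNIV. s (B$j$p * B$l$q * A$p$k) (x i q))"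
    unfolding E_def sum_mult_sum smult rel by (simp add: mult.commute)
  also have "\<dots> = (\<Sum>q\<in>UNIV. \<Sum>p\<in>UNIV. s (B$j$p * A$p$k * B$l$q) (x i q))"
    by (subst sum.swap) (simp add: mult_ac)
  also have "\<dots> = (\<Sum>q\<in>UNIV. s ((B ** A)$j$k * B$l$q) (x i q))"
    by (simp add: scale_sum_left[symmetric] sum_distrib_right matrix_matrix_mult_def)
  also have "\<dots> = (if j = k then E i l else 0)"
    by (simp add: BA mat_def E_def)
  finally show ?thesis .
qed

lemma xE: "x i j = (\<Sum>l\<in>UNIV. s (A$j$l) (E i l))"
proof -
  have "(\<Sum>l\<in>UNIV. s (A$j$l) (E i l)) = (\<Sum>l\<in>UNIV. \<Sum>k\<in>UNIV. s (A$j$l * B$l$k) (x i k))"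
    by (simp add: E_def scale_sum_right)
  also have "\<dots> = (\<Sum>k\<in>UNIV. s ((A ** B)$j$k) (x i k))"
    by (subst sum.swap) (simp add: scale_sum_left[symmetric] matrix_matrix_mult_def)
  also have "\<dots> = x i j" by (simp add: AB mat_def sif sum.delta)
  finally show ?thesis by simp
qed

definition f :: "complex^'n^'n \<Rightarrow> 'a" where
  "f M = (\<Sum>i\<in>UNIV. \<Sum>j\<in>UNIV. s (M$i$j) (E i j))"

lemma f_add: "f (M + N) = f M + f N"
  by (simp add: f_def scale_left_distrib sum.distrib)

lemma f_scale: "f (mat_cscale c M) = s c (f M)"
  by (simp add: f_def mat_cscale_def scale_sum_right)

lemma f_zero: "f 0 = 0"
  by (simp add: f_def)

lemma f_mult: "f (M ** N) = f M * f N"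
proof -
  have "f M * f N = (\<Sum>i\<in>UNIV. \<Sum>k\<in>UNIV. \<Sum>j\<in>UNIV. \<Sum>l\<in>UNIV. s (M$i$j * N$k$l) (E i j * E k l))"
    unfolding f_def by (simp add: sum_mult_sum smult)
  also have "\<dots> = (\<Sum>i\<in>UNIV. \<Sum>k\<in>UNIV. \<Sum>l\<in>UNIV. s (M$i$k * N$k$l) (E i l))"
    by (simp only: EE delta2)
  also have "\<dots> = (\<Sum>i\<in>UNIV. \<Sum>l\<in>UNIV. \<Sum>j\<in>UNIV. s (M$i$j * N$j$l) (E i l))"
    by (rule sum.cong[OF refl], rule sum.swap)
  also have "\<dots> = f (M ** N)"
    by (simp add: f_def matrix_matrix_mult_def scale_sum_left)
  finally show ?thesis by simp
qed

lemma sandwich: "E p a * f M * E b q = s (M$a$b) (E p q)"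
proof -
  have "f M * E b q = (\<Sum>i\<in>UNIV. s (M$i$b) (E i q))"
    unfolding f_def sum_mult ml[symmetric] EE
    by (simp add: if_distrib sum.delta cong: if_cong)
  then show ?thesis
    unfolding mult.assoc by (simp add: mult_sum mr[symmetric] EE if_distrib sum.delta cong: if_cong)
qed

lemma sif0: "s (if P then a else 0) y = (if P then s a y else 0)"
  by simp

lemma delta_gen: "(\<Sum>j\<in>(UNIV::'n set). \<Sum>l\<in>L. (if j = k then g j l else (0::'a))) = (\<Sum>l\<in>L. g k l)"
proof -
  have "(\<Sum>j\<in>(UNIV::'n set). \<Sum>l\<in>L. (if j = k then g j l else (0::'a)))
     = (\<Sum>j\<in>(UNIV::'n set). if j = k then (\<Sum>l\<in>L. g j l) else 0)"
    by (rule sum.cong) auto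
  also have "\<dots> = (\<Sum>l\<in>L. g k l)" by (simp add: sum.delta')
  finally show ?thesis .
qed

lemma delta_pair: "(\<Sum>k\<in>UNIV. \<Sum>l\<in>UNIV. if (k, l) = (a::'n\<times>'n) then g k l else (0::'a)) = g (fst a) (snd a)"
proof -
  obtain i j where a: "a = (i, j)" by (cases a)
  have "(\<Sum>k\<in>UNIV. \<Sum>l\<in>UNIV. if (k, l) = a then g k l else (0::'a))
     = (\<Sum>k\<in>UNIV. \<Sum>l\<in>UNIV. (if k = i then (if l = j then g k l else 0) else 0))"
    by (intro sum.cong) (auto simp: a)
  also have "\<dots> = g i j" by (simp only: delta_gen) (simp add: sum.delta')
  finally show ?thesis by (simp add: a)
qed

lemma x_f: "x i j = f (\<chi> p l. if p = i then A$j$l else 0)"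
  unfolding f_def by (simp only: vec_lambda_beta sif0 delta_gen xE)

lemma comb: "(\<Sum>i\<in>UNIV. \<Sum>j\<in>UNIV. s (c i j) (x i j)) = f ((\<chi> i j. c i j) ** A)"
proof -
  have "(\<Sum>i\<in>UNIV. \<Sum>j\<in>UNIV. s (c i j) (x i j))
     = (\<Sum>i\<in>UNIV. \<Sum>j\<in>UNIV. \<Sum>l\<in>UNIV. s (c i j * A$j$l) (E i l))"
    by (simp add: xE scale_sum_right)
  also have "\<dots> = (\<Sum>i\<in>UNIV. \<Sum>l\<in>UNIV. \<Sum>j\<in>UNIV. s (c i j * A$j$l) (E i l))"
    by (rule sum.cong[OF refl], rule sum.swap)
  also have "\<dots> = f ((\<chi> i j. c i j) ** A)"
    by (simp add: f_def matrix_matrix_mult_def scale_sum_left)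
  finally show ?thesis .
qed

lemma subspace_range_f: "subspace (range f)"
proof (rule subspaceI)
  show "0 \<in> range f" using f_zero by (metis rangeI)
  show "a + b \<in> range f" if ha: "a \<in> range f" "b \<in> range f" for a b
  proof -
    obtain M N where "a = f M" "b = f N" using ha by auto
    then show ?thesis using f_add[of M N] by (metis rangeI)
  qed
  show "s c a \<in> range f" if ha: "a \<in> range f" for c a
  proof -
    obtain M where "a = f M" using ha by auto
    then show ?thesis using f_scale[of c M] by (metis rangeI)
  qed
qed

lemma surj_f:
  assumes "span (range (\<lambda>(i, j). x i j)) = UNIV"
  shows "range f = UNIV"
proof -
  have "range (\<lambda>(i, j). x i j) \<subseteq> range f"
    using x_f by auto
  then have "span (range (\<lambda>(i, j). x i j)) \<subseteq> range f"
    using span_minimal subspace_range_f by blast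
  then show ?thesis using assms by auto
qed

lemma f_diff: "f (M - N) = f M - f N"
  using f_add[of "M - N" N] by (simp add: algebra_simps)

lemma u_eq: "f (mat 1) = (\<Sum>i\<in>UNIV. \<Sum>j\<in>UNIV. s (B $ i $ j) (x i j))"
  unfolding f_def mat_def by (simp add: sif sum.delta E_def)

lemma sumX: "(\<Sum>i\<in>UNIV. \<Sum>j\<in>UNIV. s (c i j) (x i j)) = (\<Sum>p\<in>UNIV. s (case_prod c p) (case_prod x p))"
  by (auto simp: sum.cartesian_product UNIV_Times_UNIV[symmetric] split_def simp del: UNIV_Times_UNIV intro!: sum.cong)

lemma main:
  assumes spans: "span (range (\<lambda>(i, j). x i j)) = UNIV"
  shows "(UNIV :: 'a set) = {0} \<or>
         ((UNIV :: 'a set) \<noteq> {0} \<and>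
          (\<exists>f :: complex^'n^'n \<Rightarrow> 'a. matrix_algebra_iso s f) \<and>
          inj (\<lambda>(i, j). x i j) \<and>
          \<not> dependent (range (\<lambda>(i, j). x i j)) \<and>
          (\<forall>i j. x i j \<noteq> 0) \<and>
          (let u = (\<Sum>i\<in>UNIV. \<Sum>j\<in>UNIV. s (B $ i $ j) (x i j))
           in \<forall>y. u * y = y \<and> y * u = y))"
proof (cases "\<exists>p q. E p q \<noteq> 0")
  case False
  then have "f M = 0" for M by (simp add: f_def)
  then have "range f = {0}" by auto
  then show ?thesis using surj_f[OF spans] by simp
next
  case True
  then obtain p q where pq: "E p q \<noteq> 0" by blast
  have ker: "M = 0" if "f M = 0" for M
  proof -
    have "M $ a $ b = 0" for a b
    proof -
      have "s (M$a$b) (E p q) = 0" using sandwich[of p a M b q] that by simp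
      then show ?thesis using pq by simp
    qed
    then show ?thesis by (simp add: vec_eq_iff)
  qed
  have injf: "inj f"
  proof (rule injI)
    fix M N assume "f M = f N"
    then have "f (M - N) = 0" by (simp add: f_diff)
    then show "M = N" using ker[of "M - N"] by simp
  qed
  have surjf: "range f = UNIV" using surj_f[OF spans] .
  have iso: "matrix_algebra_iso s f"
    unfolding matrix_algebra_iso_def bij_def
    using injf surjf f_add f_scale f_mult by auto
  have comb0: "c i j = 0" if "(\<Sum>i\<in>UNIV. \<Sum>j\<in>UNIV. s (c i j) (x i j)) = 0" for c i j
  proof -
    let ?C = "(\<chi> i j. c i j) :: complex^'n^'n"
    have "?C ** A = 0" using that comb ker by simp
    then have "?C ** A ** B = 0" by simp
    then have "?C = 0" by (simp add: matrix_mul_assoc[symmetric] AB)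
    then show ?thesis by (simp add: vec_eq_iff)
  qed
  have xnz: "x i j \<noteq> 0" for i j
  proof
    assume "x i j = 0"
    have "(\<Sum>k\<in>UNIV. \<Sum>l\<in>UNIV. s (if (k, l) = (i, j) then 1 else 0) (x k l)) = x i j"
    proof -
      have "(\<Sum>k\<in>UNIV. \<Sum>l\<in>UNIV. s (if (k, l) = (i, j) then 1 else 0) (x k l))
         = (\<Sum>k\<in>UNIV. \<Sum>l\<in>UNIV. (if k = i then (if l = j then x k l else 0) else 0))"
        by (intro sum.cong) auto
      also have "\<dots> = x i j" by (simp only: delta_gen) (simp add: sum.delta')
      finally show ?thesis .
    qed
    then have "(if (i, j) = (i, j) then 1 else 0 :: complex) = 0"
      using comb0[of "\<lambda>k l. if (k, l) = (i, j) then 1 else 0" i j] \<open>x i j = 0\<close> by simp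
    then show False by simp
  qed
  have injx: "inj (\<lambda>(i, j). x i j)"
  proof (rule injI)
    fix a b :: "'n \<times> 'n"
    assume eq: "(\<lambda>(i, j). x i j) a = (\<lambda>(i, j). x i j) b"
    show "a = b"
    proof (rule ccontr)
      assume ne: "a \<noteq> b"
      let ?c = "\<lambda>k l. (if (k, l) = a then 1 else 0) - (if (k, l) = b then 1 else (0::complex))"
      have "(\<Sum>k\<in>UNIV. \<Sum>l\<in>UNIV. s (?c k l) (x k l)) = case_prod x a - case_prod x b"
        by (simp add: scale_left_diff_distrib sum_subtractf sif delta_pair split_def)
      also have "\<dots> = 0" using eq by (simp add: split_def)
      finally have "?c (fst a) (snd a) = 0" by (rule comb0)
      then show False using ne by simp
    qed
  qed
  have indep: "\<not> dependent (range (\<lambda>(i, j). x i j))"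
  proof
    let ?X = "\<lambda>(i, j). x i j"
    assume "dependent (range ?X)"
    then obtain t u v0 where t: "finite t" "t \<subseteq> range ?X" "(\<Sum>v\<in>t. s (u v) v) = 0"
      and v0: "v0 \<in> t" "u v0 \<noteq> 0"
      unfolding dependent_explicit by blast
    let ?c = "\<lambda>i j. if x i j \<in> t then u (x i j) else 0"
    have "(\<Sum>i\<in>UNIV. \<Sum>j\<in>UNIV. s (?c i j) (x i j))
       = (\<Sum>p\<in>UNIV. if ?X p \<in> t then s (u (?X p)) (?X p) else 0)"
      unfolding sumX by (simp add: split_def case_prod_beta sif0 cong: if_cong)
    also have "\<dots> = (\<Sum>p\<in>{p. ?X p \<in> t}. s (u (?X p)) (?X p))"
      by (simp add: sum.inter_filter[symmetric])
    also have "\<dots> = (\<Sum>v\<in>?X ` {p. ?X p \<in> t}. s (u v) v)"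
      by (rule sum.reindex[symmetric, unfolded comp_def]) (rule inj_on_subset[OF injx], simp)
    also have "?X ` {p. ?X p \<in> t} = t" using t(2) by auto
    finally have h0: "(\<Sum>i\<in>UNIV. \<Sum>j\<in>UNIV. s (?c i j) (x i j)) = 0" using t(3) by simp
    obtain p where p: "v0 = ?X p" using v0 t(2) by auto
    have "?c (fst p) (snd p) = 0" using comb0[of ?c "fst p" "snd p"] h0 by blast
    then show False using v0 p by (simp add: split_def)
  qed
  have unit: "f (mat 1) * y = y \<and> y * f (mat 1) = y" for y
  proof -
    obtain N where "y = f N" using surjf by (metis UNIV_I image_iff)
    then show ?thesis by (simp add: f_mult[symmetric])
  qed
  have "(UNIV :: 'a set) \<noteq> {0}" using pq by auto
  then show ?thesis
    using iso injx indep xnz unit u_eq by (auto simp: Let_def)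
qed

end

theorem theorem31:
  fixes s :: "complex \<Rightarrow> 'a::ring \<Rightarrow> 'a"
    and A :: "complex^'n^'n"
    and x :: "'n \<Rightarrow> 'n \<Rightarrow> 'a"
  assumes alg: "complex_algebra s"
    and inv: "invertible A"
    and spans: "module.span s (range (\<lambda>(i, j). x i j)) = UNIV"
    and rel: "\<And>i j k l. x i j * x k l = s (A $ j $ k) (x i l)"
  shows "(UNIV :: 'a set) = {0} \<or>
         ((UNIV :: 'a set) \<noteq> {0} \<and>
          (\<exists>f :: complex^'n^'n \<Rightarrow> 'a. matrix_algebra_iso s f) \<and>
          inj (\<lambda>(i, j). x i j) \<and>
          \<not> module.dependent s (range (\<lambda>(i, j). x i j)) \<and>
          (\<forall>i j. x i j \<noteq> 0) \<and>
          (let u = (\<Sum>i\<in>UNIV. \<Sum>j\<in>UNIV. s (matrix_inv A $ i $ j) (x i j))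
           in \<forall>y. u * y = y \<and> y * u = y))"
proof -
  have "XA s A x"
    using alg inv rel unfolding XA_def XA_axioms_def complex_algebra_def by metis
  then show ?thesis using XA.main[of s A x] spans by (simp add: XA.B_def)
qed

end
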